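(* There is an admissible set $T' \subseteq \{0,1,2\}^{1562}$ such that $|T'| = 142 \cdot 37 \cdot \binom{11}{7}^{141}$ and every $t \in T'$ has weight $990$.
   Context: A set $S\subseteq\{0,1,2\}^m$ is admissible if (1) for all distinct $s,s'\in S$ there are coordinates $i,j$ with $s_i=0\neq s'_i$ and $s_j\neq 0=s'_j$; and (2) for all distinct $s,s',s''\in S$ there is a coordinate $k$ such that the multiset $\{s_k,s'_k,s''_k\}$ equals $\{0,1,2\}$, $\{0,0,1\}$ or $\{0,0,2\}$. The weight of a vector is its number of nonzero coordinates. *)

theory Defs
  imports Main "HOL-Library.Multiset"
begin

definition ternary_vecs :: "nat \<Rightarrow> nat list set" where
  "ternary_vecs m = {s. length s = m \<and> set s \<subseteq> {0, 1, 2}}"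

definition admissible :: "nat \<Rightarrow> nat list set \<Rightarrow> bool" where
  "admissible m S \<longleftrightarrow>
     S \<subseteq> ternary_vecs m \<and>
     (\<forall>s\<in>S. \<forall>s'\<in>S. s \<noteq> s' \<longrightarrow>
        (\<exists>i<m. s ! i = 0 \<and> s' ! i \<noteq> 0) \<and> (\<exists>j<m. s ! j \<noteq> 0 \<and> s' ! j = 0)) \<and>
     (\<forall>s\<in>S. \<forall>s'\<in>S. \<forall>s''\<in>S. s \<noteq> s' \<and> s \<noteq> s'' \<and> s' \<noteq> s'' \<longrightarrow>
        (\<exists>k<m. mset [s ! k, s' ! k, s'' ! k] \<in> {{#0, 1, 2#}, {#0, 0, 1#}, {#0, 0, 2#}}))"

definition weight :: "nat list \<Rightarrow> nat" where
  "weight s = card {i. i < length s \<and> s ! i \<noteq> 0}"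

end

theory Submission
  imports Defs
begin

datatype pt = P0 | P1 | P2 | P3 | P4 | P5 | P6 | P7 | P8 | P9 | P10

definition allpts :: "pt list" where "allpts = [P0,P1,P2,P3,P4,P5,P6,P7,P8,P9,P10]"

lemma allpts_distinct: "distinct allpts" by (simp add: allpts_def)
lemma in_allpts: "q \<in> set allpts" by (cases q) (simp_all add: allpts_def)
lemma set_allpts: "set allpts = UNIV" using in_allpts by blast
lemma length_allpts: "length allpts = 11" by (simp add: allpts_def)

instance pt :: finite
proof
  show "finite (UNIV :: pt set)" by (metis List.finite_set set_allpts)
qed

lemma card_UNIV_pt: "card (UNIV :: pt set) = 11"
  using distinct_card[OF allpts_distinct] set_allpts length_allpts by simp

fun phi :: "pt \<Rightarrow> pt \<Rightarrow> bool" where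
  "phi P0 P0 = False" |
  "phi P0 P1 = False" |
  "phi P0 P2 = False" |
  "phi P0 P3 = True" |
  "phi P0 P4 = True" |
  "phi P0 P5 = True" |
  "phi P0 P6 = True" |
  "phi P0 P7 = True" |
  "phi P0 P8 = True" |
  "phi P0 P9 = True" |
  "phi P0 P10 = False" |
  "phi P1 P0 = True" |
  "phi P1 P1 = False" |
  "phi P1 P2 = True" |
  "phi P1 P3 = False" |
  "phi P1 P4 = False" |
  "phi P1 P5 = False" |
  "phi P1 P6 = True" |
  "phi P1 P7 = False" |
  "phi P1 P8 = False" |
  "phi P1 P9 = False" |
  "phi P1 P10 = False" |
  "phi P2 P0 = True" |
  "phi P2 P1 = False" |
  "phi P2 P2 = False" |
  "phi P2 P3 = True" |
  "phi P2 P4 = True" |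
  "phi P2 P5 = True" |
  "phi P2 P6 = False" |
  "phi P2 P7 = True" |
  "phi P2 P8 = True" |
  "phi P2 P9 = True" |
  "phi P2 P10 = False" |
  "phi P3 P0 = False" |
  "phi P3 P1 = False" |
  "phi P3 P2 = False" |
  "phi P3 P3 = False" |
  "phi P3 P4 = False" |
  "phi P3 P5 = False" |
  "phi P3 P6 = False" |
  "phi P3 P7 = True" |
  "phi P3 P8 = True" |
  "phi P3 P9 = True" |
  "phi P3 P10 = False" |
  "phi P4 P0 = False" |
  "phi P4 P1 = False" |
  "phi P4 P2 = False" |
  "phi P4 P3 = True" |
  "phi P4 P4 = False" |
  "phi P4 P5 = True" |
  "phi P4 P6 = False" |
  "phi P4 P7 = True" |
  "phi P4 P8 = True" |
  "phi P4 P9 = True" |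
  "phi P4 P10 = False" |
  "phi P5 P0 = False" |
  "phi P5 P1 = False" |
  "phi P5 P2 = False" |
  "phi P5 P3 = True" |
  "phi P5 P4 = False" |
  "phi P5 P5 = False" |
  "phi P5 P6 = False" |
  "phi P5 P7 = True" |
  "phi P5 P8 = False" |
  "phi P5 P9 = True" |
  "phi P5 P10 = False" |
  "phi P6 P0 = False" |
  "phi P6 P1 = True" |
  "phi P6 P2 = False" |
  "phi P6 P3 = True" |
  "phi P6 P4 = True" |
  "phi P6 P5 = True" |
  "phi P6 P6 = False" |
  "phi P6 P7 = True" |
  "phi P6 P8 = True" |
  "phi P6 P9 = True" |
  "phi P6 P10 = False" |
  "phi P7 P0 = False" |
  "phi P7 P1 = False" |
  "phi P7 P2 = False" |
  "phi P7 P3 = True" |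
  "phi P7 P4 = False" |
  "phi P7 P5 = True" |
  "phi P7 P6 = False" |
  "phi P7 P7 = False" |
  "phi P7 P8 = True" |
  "phi P7 P9 = False" |
  "phi P7 P10 = False" |
  "phi P8 P0 = False" |
  "phi P8 P1 = False" |
  "phi P8 P2 = False" |
  "phi P8 P3 = True" |
  "phi P8 P4 = False" |
  "phi P8 P5 = True" |
  "phi P8 P6 = False" |
  "phi P8 P7 = False" |
  "phi P8 P8 = False" |
  "phi P8 P9 = True" |
  "phi P8 P10 = False" |
  "phi P9 P0 = False" |
  "phi P9 P1 = False" |
  "phi P9 P2 = False" |
  "phi P9 P3 = False" |
  "phi P9 P4 = False" |
  "phi P9 P5 = True" |
  "phi P9 P6 = False" |
  "phi P9 P7 = True" |
  "phi P9 P8 = True" |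
  "phi P9 P9 = False" |
  "phi P9 P10 = False" |
  "phi P10 P0 = True" |
  "phi P10 P1 = True" |
  "phi P10 P2 = False" |
  "phi P10 P3 = False" |
  "phi P10 P4 = False" |
  "phi P10 P5 = False" |
  "phi P10 P6 = True" |
  "phi P10 P7 = False" |
  "phi P10 P8 = False" |
  "phi P10 P9 = False" |
  "phi P10 P10 = False"

fun parl :: "pt \<Rightarrow> pt list \<Rightarrow> bool" where
  "parl i [] = False"
| "parl i (j#js) = (phi i j \<noteq> parl i js)"

definition good :: "pt list \<Rightarrow> pt list \<Rightarrow> pt list \<Rightarrow> bool" where
  "good X Y Z = (list_ex (\<lambda>i. parl i Y \<noteq> parl i Z) X \<or> list_ex (\<lambda>i. parl i X \<noteq> parl i Z) Y
     \<or> list_ex (\<lambda>i. parl i X \<noteq> parl i Y) Z)"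

fun chkS :: "pt list \<Rightarrow> nat \<Rightarrow> nat \<Rightarrow> nat \<Rightarrow> nat \<Rightarrow> pt list \<Rightarrow> pt list \<Rightarrow> pt list \<Rightarrow> bool" where
  "chkS [] st a b c X Y Z = (if a=0 \<and> b=0 \<and> c=0 then good X Y Z else True)"
| "chkS (p#ps) st a b c X Y Z = (if chkS ps st a b c X Y Z then
   (if a=0 then True else chkS ps (max st 1) (a-1) b c (p#X) Y Z) \<and>
   (if b=0 \<or> st < 1 then True else chkS ps (max st 2) a (b-1) c X (p#Y) Z) \<and>
   (if c=0 \<or> st < 2 then True else chkS ps 3 a b (c-1) X Y (p#Z)) else False)"

lemma chk1: "chkS allpts 0 1 1 1 [] [] []" by code_simp

definition par :: "pt \<Rightarrow> pt set \<Rightarrow> bool" where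
  "par i A = odd (card {j\<in>A. phi i j})"

definition goodS :: "pt set \<Rightarrow> pt set \<Rightarrow> pt set \<Rightarrow> bool" where
  "goodS X Y Z = ((\<exists>i\<in>X. par i Y \<noteq> par i Z) \<or> (\<exists>i\<in>Y. par i X \<noteq> par i Z) \<or> (\<exists>i\<in>Z. par i X \<noteq> par i Y))"

lemma parl_par: "distinct L \<Longrightarrow> parl i L = par i (set L)"
proof (induction L)
  case Nil then show ?case by (simp add: par_def)
next
  case (Cons j js)
  have e: "{x\<in>set (j#js). phi i x} = (if phi i j then insert j {x\<in>set js. phi i x} else {x\<in>set js. phi i x})"
    by auto
  have c: "card {x\<in>set (j#js). phi i x} = (if phi i j then Suc (card {x\<in>set js. phi i x}) else card {x\<in>set js. phi i x})"
    using Cons.prems by (subst e) auto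
  have "parl i (j#js) = (phi i j \<noteq> par i (set js))" using Cons by simp
  also have "\<dots> = par i (set (j#js))" unfolding par_def c by simp
  finally show ?case .
qed

lemma good_goodS: "distinct xs \<Longrightarrow> distinct ys \<Longrightarrow> distinct zs \<Longrightarrow> good xs ys zs = goodS (set xs) (set ys) (set zs)"
  by (simp add: good_def goodS_def parl_par list_ex_iff)

fun bef :: "'a \<Rightarrow> 'a \<Rightarrow> 'a list \<Rightarrow> bool" where
  "bef x y [] = False"
| "bef x y (p#ps) = ((p = x \<and> y \<in> set ps) \<or> bef x y ps)"

lemma bef_set: "bef x y ps \<Longrightarrow> y \<in> set ps"
  by (induction ps) auto

lemma chkS_complete:
  "chkS ps st a b c X Y Z \<Longrightarrow> distinct ps \<Longrightarrow> A \<subseteq> set ps \<Longrightarrow> B \<subseteq> set ps \<Longrightarrow> C \<subseteq> set ps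
   \<Longrightarrow> A \<inter> B = {} \<Longrightarrow> A \<inter> C = {} \<Longrightarrow> B \<inter> C = {}
   \<Longrightarrow> card A = a \<Longrightarrow> card B = b \<Longrightarrow> card C = c
   \<Longrightarrow> (st < 1 \<longrightarrow> (\<forall>y\<in>B\<union>C. \<exists>x\<in>A. bef x y ps))
   \<Longrightarrow> (st < 2 \<longrightarrow> (\<forall>z\<in>C. \<exists>y\<in>B. bef y z ps))
   \<Longrightarrow> \<exists>xs ys zs. set xs = A \<and> set ys = B \<and> set zs = C \<and> distinct xs \<and> distinct ys \<and> distinct zs
        \<and> good (xs@X) (ys@Y) (zs@Z)"
proof (induction ps arbitrary: st a b c X Y Z A B C)
  case Nil
  then show ?case by (auto split: if_splits)
next
  case (Cons p ps)
  have ch: "chkS ps st a b c X Y Z" using Cons.prems(1) by (simp split: if_splits)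
  have fA: "finite A" "finite B" "finite C" by auto
  consider "p \<in> A" | "p \<in> B" | "p \<in> C" | "p \<notin> A" "p \<notin> B" "p \<notin> C" by blast
  then show ?case
  proof cases
    case 1
    have pB: "p \<notin> B" "p \<notin> C" using 1 Cons.prems by auto
    have a0: "a \<noteq> 0" using 1 Cons.prems fA by auto
    have ch': "chkS ps (max st 1) (a-1) b c (p#X) Y Z" using Cons.prems(1) a0 by (simp split: if_splits)
    have pn: "p \<notin> set ps" using Cons.prems(2) by simp
    have "\<exists>xs ys zs. set xs = A - {p} \<and> set ys = B \<and> set zs = C \<and> distinct xs \<and> distinct ys \<and> distinct zs
        \<and> good (xs@(p#X)) (ys@Y) (zs@Z)"
    proof (rule Cons.IH[OF ch'])
      show "distinct ps" using Cons.prems(2) by simp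
      show "A - {p} \<subseteq> set ps" using Cons.prems(3) by auto
      show "B \<subseteq> set ps" using Cons.prems(4) pB by auto
      show "C \<subseteq> set ps" using Cons.prems(5) pB by auto
      show "(A - {p}) \<inter> B = {}" "(A - {p}) \<inter> C = {}" "B \<inter> C = {}" using Cons.prems(6,7,8) by auto
      show "card (A - {p}) = a - 1" using Cons.prems(9) 1 fA by simp
      show "card B = b" "card C = c" using Cons.prems(10,11) by auto
      show "max st 1 < 1 \<longrightarrow> (\<forall>y\<in>B \<union> C. \<exists>x\<in>A - {p}. bef x y ps)" by simp
      show "max st 1 < 2 \<longrightarrow> (\<forall>z\<in>C. \<exists>y\<in>B. bef y z ps)"
      proof
        assume "max st 1 < 2"
        then have "st < 2" by simp
        then have h: "\<forall>z\<in>C. \<exists>y\<in>B. bef y z (p#ps)" using Cons.prems(13) by simp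
        show "\<forall>z\<in>C. \<exists>y\<in>B. bef y z ps"
        proof
          fix z assume "z \<in> C"
          then obtain y where "y \<in> B" "bef y z (p#ps)" using h by blast
          then show "\<exists>y\<in>B. bef y z ps" using pB by auto
        qed
      qed
    qed
    then obtain xs ys zs where r: "set xs = A - {p}" "set ys = B" "set zs = C" "distinct xs" "distinct ys" "distinct zs"
        "good (xs@(p#X)) (ys@Y) (zs@Z)" by blast
    show ?thesis
      by (rule exI[of _ "xs@[p]"], rule exI[of _ ys], rule exI[of _ zs]) (use r 1 in auto)
  next
    case 2
    have pB: "p \<notin> A" "p \<notin> C" using 2 Cons.prems by auto
    have b0: "b \<noteq> 0" using 2 Cons.prems fA by auto
    have pn: "p \<notin> set ps" using Cons.prems(2) by simp
    have st1: "\<not> st < 1"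
    proof
      assume "st < 1"
      with Cons.prems(12) have "\<forall>y\<in>B \<union> C. \<exists>x\<in>A. bef x y (p#ps)" by (rule mp)
      then obtain x where "x \<in> A" "bef x p (p#ps)" using 2 by blast
      then show False using pn pB bef_set by fastforce
    qed
    have ch': "chkS ps (max st 2) a (b-1) c X (p#Y) Z" using Cons.prems(1) b0 st1 by (simp split: if_splits)
    have "\<exists>xs ys zs. set xs = A \<and> set ys = B - {p} \<and> set zs = C \<and> distinct xs \<and> distinct ys \<and> distinct zs
        \<and> good (xs@X) (ys@(p#Y)) (zs@Z)"
    proof (rule Cons.IH[OF ch'])
      show "distinct ps" using Cons.prems(2) by simp
      show "A \<subseteq> set ps" using Cons.prems(3) pB by auto
      show "B - {p} \<subseteq> set ps" using Cons.prems(4) by auto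
      show "C \<subseteq> set ps" using Cons.prems(5) pB by auto
      show "A \<inter> (B - {p}) = {}" "A \<inter> C = {}" "(B - {p}) \<inter> C = {}" using Cons.prems(6,7,8) by auto
      show "card (B - {p}) = b - 1" using Cons.prems(10) 2 fA by simp
      show "card A = a" "card C = c" using Cons.prems(9,11) by auto
      show "max st 2 < 1 \<longrightarrow> (\<forall>y\<in>(B - {p}) \<union> C. \<exists>x\<in>A. bef x y ps)" by simp
      show "max st 2 < 2 \<longrightarrow> (\<forall>z\<in>C. \<exists>y\<in>B - {p}. bef y z ps)" by simp
    qed
    then obtain xs ys zs where r: "set xs = A" "set ys = B - {p}" "set zs = C" "distinct xs" "distinct ys" "distinct zs"
        "good (xs@X) (ys@(p#Y)) (zs@Z)" by blast
    show ?thesis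
      by (rule exI[of _ xs], rule exI[of _ "ys@[p]"], rule exI[of _ zs]) (use r 2 in auto)
  next
    case 3
    have pB: "p \<notin> A" "p \<notin> B" using 3 Cons.prems by auto
    have c0: "c \<noteq> 0" using 3 Cons.prems fA by auto
    have pn: "p \<notin> set ps" using Cons.prems(2) by simp
    have st1: "\<not> st < 2"
    proof
      assume "st < 2"
      then obtain x where "x \<in> B" "bef x p (p#ps)" using Cons.prems(13) 3 by blast
      then show False using pn pB bef_set by fastforce
    qed
    have ch': "chkS ps 3 a b (c-1) X Y (p#Z)" using Cons.prems(1) c0 st1 by (simp split: if_splits)
    have "\<exists>xs ys zs. set xs = A \<and> set ys = B \<and> set zs = C - {p} \<and> distinct xs \<and> distinct ys \<and> distinct zs
        \<and> good (xs@X) (ys@Y) (zs@(p#Z))"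
    proof (rule Cons.IH[OF ch'])
      show "distinct ps" using Cons.prems(2) by simp
      show "A \<subseteq> set ps" using Cons.prems(3) pB by auto
      show "B \<subseteq> set ps" using Cons.prems(4) pB by auto
      show "C - {p} \<subseteq> set ps" using Cons.prems(5) by auto
      show "A \<inter> B = {}" "A \<inter> (C - {p}) = {}" "B \<inter> (C - {p}) = {}" using Cons.prems(6,7,8) by auto
      show "card (C - {p}) = c - 1" using Cons.prems(11) 3 fA by simp
      show "card A = a" "card B = b" using Cons.prems(9,10) by auto
      show "(3::nat) < 1 \<longrightarrow> (\<forall>y\<in>B \<union> (C - {p}). \<exists>x\<in>A. bef x y ps)" by simp
      show "(3::nat) < 2 \<longrightarrow> (\<forall>z\<in>C - {p}. \<exists>y\<in>B. bef y z ps)" by simp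
    qed
    then obtain xs ys zs where r: "set xs = A" "set ys = B" "set zs = C - {p}" "distinct xs" "distinct ys" "distinct zs"
        "good (xs@X) (ys@Y) (zs@(p#Z))" by blast
    show ?thesis
      by (rule exI[of _ xs], rule exI[of _ ys], rule exI[of _ "zs@[p]"]) (use r 3 in auto)
  next
    case 4
    have "\<exists>xs ys zs. set xs = A \<and> set ys = B \<and> set zs = C \<and> distinct xs \<and> distinct ys \<and> distinct zs
        \<and> good (xs@X) (ys@Y) (zs@Z)"
    proof (rule Cons.IH[OF ch])
      show "distinct ps" using Cons.prems(2) by simp
      show "A \<subseteq> set ps" "B \<subseteq> set ps" "C \<subseteq> set ps" using Cons.prems(3,4,5) 4 by auto
      show "A \<inter> B = {}" "A \<inter> C = {}" "B \<inter> C = {}" using Cons.prems(6,7,8) by auto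
      show "card A = a" "card B = b" "card C = c" using Cons.prems(9,10,11) by auto
      show "st < 1 \<longrightarrow> (\<forall>y\<in>B \<union> C. \<exists>x\<in>A. bef x y ps)"
        using Cons.prems(12) 4 by fastforce
      show "st < 2 \<longrightarrow> (\<forall>z\<in>C. \<exists>y\<in>B. bef y z ps)"
        using Cons.prems(13) 4 by fastforce
    qed
    then show ?thesis .
  qed
qed

lemma chk2: "chkS allpts 0 2 2 2 [] [] []" by code_simp
lemma chk3: "chkS allpts 0 3 3 3 [] [] []" by code_simp

fun pos :: "pt \<Rightarrow> nat" where
  "pos P0 = 0" | "pos P1 = 1" | "pos P2 = 2" | "pos P3 = 3" | "pos P4 = 4" | "pos P5 = 5"
| "pos P6 = 6" | "pos P7 = 7" | "pos P8 = 8" | "pos P9 = 9" | "pos P10 = 10"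

lemma bef_pos: "bef x y allpts \<longleftrightarrow> pos x < pos y"
  by (cases x; cases y; simp add: allpts_def)

lemma pos_inj: "pos x = pos y \<Longrightarrow> x = y"
  by (cases x; cases y; simp)

lemma goodS_sym1: "goodS X Y Z \<Longrightarrow> goodS Y X Z"
  unfolding goodS_def by blast
lemma goodS_sym2: "goodS X Y Z \<Longrightarrow> goodS X Z Y"
  unfolding goodS_def by blast

lemma goodS_ordered:
  assumes d: "X \<inter> Y = {}" "X \<inter> Z = {}" "Y \<inter> Z = {}"
    and c: "card X = c" "card Y = c" "card Z = c" "c \<in> {1,2,3}"
    and m: "x0 \<in> X" "\<forall>x\<in>X. pos x0 \<le> pos x" "y0 \<in> Y" "\<forall>y\<in>Y. pos y0 \<le> pos y"
           "z0 \<in> Z" "\<forall>z\<in>Z. pos z0 \<le> pos z"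
    and o: "pos x0 < pos y0" "pos y0 < pos z0"
  shows "goodS X Y Z"
proof -
  have ch: "chkS allpts 0 c c c [] [] []" using c(4) chk1 chk2 chk3 by auto
  have "\<exists>xs ys zs. set xs = X \<and> set ys = Y \<and> set zs = Z \<and> distinct xs \<and> distinct ys \<and> distinct zs
        \<and> good (xs@[]) (ys@[]) (zs@[])"
  proof (rule chkS_complete[OF ch allpts_distinct])
    show "X \<subseteq> set allpts" "Y \<subseteq> set allpts" "Z \<subseteq> set allpts" by (auto simp: set_allpts)
    show "X \<inter> Y = {}" "X \<inter> Z = {}" "Y \<inter> Z = {}" by fact+
    show "card X = c" "card Y = c" "card Z = c" by fact+
    show "0 < 1 \<longrightarrow> (\<forall>y\<in>Y \<union> Z. \<exists>x\<in>X. bef x y allpts)"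
      using m o by (force simp: bef_pos)
    show "0 < 2 \<longrightarrow> (\<forall>z\<in>Z. \<exists>y\<in>Y. bef y z allpts)"
      using m o by (force simp: bef_pos)
  qed
  then obtain xs ys zs where "set xs = X" "set ys = Y" "set zs = Z" "distinct xs" "distinct ys" "distinct zs"
    "good xs ys zs" by auto
  then show ?thesis using good_goodS by blast
qed

lemma PC:
  assumes d: "X \<inter> Y = {}" "X \<inter> Z = {}" "Y \<inter> Z = {}"
    and c: "card X = card Y" "card X = card Z" "0 < card X"
  shows "goodS X Y Z"
proof -
  have "card (X \<union> Y \<union> Z) = card X + card Y + card Z"
    using d by (simp add: card_Un_disjoint Int_Un_distrib2)
  moreover have "card (X \<union> Y \<union> Z) \<le> 11"
    using card_mono[of UNIV "X \<union> Y \<union> Z"] card_UNIV_pt by simp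
  ultimately have c3: "card X \<in> {1,2,3}" using c by auto
  have ne: "X \<noteq> {}" "Y \<noteq> {}" "Z \<noteq> {}" using c by auto
  obtain x0 where x0: "x0 \<in> X" "\<forall>x\<in>X. pos x0 \<le> pos x"
    using ex_has_least_nat[of "\<lambda>x. x \<in> X" _ pos] ne(1) by blast
  obtain y0 where y0: "y0 \<in> Y" "\<forall>x\<in>Y. pos y0 \<le> pos x"
    using ex_has_least_nat[of "\<lambda>x. x \<in> Y" _ pos] ne(2) by blast
  obtain z0 where z0: "z0 \<in> Z" "\<forall>x\<in>Z. pos z0 \<le> pos x"
    using ex_has_least_nat[of "\<lambda>x. x \<in> Z" _ pos] ne(3) by blast
  have n: "pos x0 \<noteq> pos y0" "pos x0 \<noteq> pos z0" "pos y0 \<noteq> pos z0"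
    using pos_inj x0 y0 z0 d by blast+
  have dd: "Y \<inter> X = {}" "Z \<inter> X = {}" "Z \<inter> Y = {}" using d by auto
  have ca: "card X = card X" and cb: "card Y = card X" and cc: "card Z = card X" using c by auto
  consider "pos x0 < pos y0" "pos y0 < pos z0" | "pos x0 < pos z0" "pos z0 < pos y0"
    | "pos y0 < pos x0" "pos x0 < pos z0" | "pos y0 < pos z0" "pos z0 < pos x0"
    | "pos z0 < pos x0" "pos x0 < pos y0" | "pos z0 < pos y0" "pos y0 < pos x0"
    using n by linarith
  then show ?thesis
  proof cases
    case 1 then show ?thesis using goodS_ordered[OF d(1) d(2) d(3) ca cb cc c3 x0 y0 z0] by blast
  next
    case 2
    have "goodS X Z Y" using goodS_ordered[OF d(2) d(1) dd(3) ca cc cb c3 x0 z0 y0] 2 by blast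
    then show ?thesis by (rule goodS_sym2)
  next
    case 3
    have "goodS Y X Z" using goodS_ordered[OF dd(1) d(3) d(2) cb ca cc c3 y0 x0 z0] 3 by blast
    then show ?thesis by (rule goodS_sym1)
  next
    case 4
    have "goodS Y Z X" using goodS_ordered[OF d(3) dd(1) dd(2) cb cc ca c3 y0 z0 x0] 4 by blast
    then show ?thesis by (meson goodS_sym1 goodS_sym2)
  next
    case 5
    have "goodS Z X Y" using goodS_ordered[OF dd(2) dd(3) d(1) cc ca cb c3 z0 x0 y0] 5 by blast
    then show ?thesis by (meson goodS_sym1 goodS_sym2)
  next
    case 6
    have "goodS Z Y X" using goodS_ordered[OF dd(3) dd(2) dd(1) cc cb ca c3 z0 y0 x0] 6 by blast
    then show ?thesis by (meson goodS_sym1 goodS_sym2)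
  qed
qed

definition labf :: "pt set \<Rightarrow> pt \<Rightarrow> nat" where
  "labf A q = (if q \<in> A then (if par q A then 2 else 1) else 0)"

definition sw :: "nat \<Rightarrow> nat" where
  "sw x = (if x = 1 then 2 else if x = 2 then 1 else x)"

definition ok3 :: "nat \<Rightarrow> nat \<Rightarrow> nat \<Rightarrow> bool" where
  "ok3 a b c = ((a \<noteq> 0 \<and> b = 0 \<and> c = 0) \<or> (a = 0 \<and> b \<noteq> 0 \<and> c = 0) \<or> (a = 0 \<and> b = 0 \<and> c \<noteq> 0)
     \<or> (a \<noteq> b \<and> a \<noteq> c \<and> b \<noteq> c))"

lemma par_Un: "E \<inter> F = {} \<Longrightarrow> par i (E \<union> F) = (par i E \<noteq> par i F)"
proof -
  assume "E \<inter> F = {}"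
  then have "card {j\<in>E \<union> F. phi i j} = card {j\<in>E. phi i j} + card {j\<in>F. phi i j}"
    by (subst card_Un_disjoint[symmetric]) (auto intro: arg_cong[where f=card])
  then show ?thesis unfolding par_def by simp
qed

lemma par_single: "par i {p} = phi i p"
proof -
  have "{j\<in>{p}. phi i j} = (if phi i p then {p} else {})" by auto
  then show ?thesis unfolding par_def by simp
qed

lemma labf_range: "labf A q \<in> {0,1,2}" by (simp add: labf_def)
lemma labf_nz: "labf A q \<noteq> 0 \<longleftrightarrow> q \<in> A" by (simp add: labf_def)

lemma lab_triple:
  assumes n: "A \<noteq> B" "A \<noteq> C" "B \<noteq> C" and c: "card A = card B" "card A = card C"
  shows "\<exists>q. ok3 (labf A q) (labf B q) (labf C q)"
proof (cases "\<exists>q. (q\<in>A \<and> q\<notin>B \<and> q\<notin>C) \<or> (q\<notin>A \<and> q\<in>B \<and> q\<notin>C) \<or> (q\<notin>A \<and> q\<notin>B \<and> q\<in>C)")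
  case True
  then obtain q where "(q\<in>A \<and> q\<notin>B \<and> q\<notin>C) \<or> (q\<notin>A \<and> q\<in>B \<and> q\<notin>C) \<or> (q\<notin>A \<and> q\<notin>B \<and> q\<in>C)" by blast
  then have "ok3 (labf A q) (labf B q) (labf C q)" unfolding ok3_def using labf_nz by metis
  then show ?thesis by blast
next
  case False
  define X where "X = A \<inter> B - C"
  define Y where "Y = A \<inter> C - B"
  define Z where "Z = B \<inter> C - A"
  define D where "D = A \<inter> B \<inter> C"
  have eA: "A = (D \<union> X) \<union> Y" "A = (D \<union> Y) \<union> X" using False by (auto simp: X_def Y_def D_def)
  have eB: "B = (D \<union> X) \<union> Z" "B = (D \<union> Z) \<union> X" using False by (auto simp: X_def Z_def D_def)
  have eC: "C = (D \<union> Y) \<union> Z" "C = (D \<union> Z) \<union> Y" using False by (auto simp: Y_def Z_def D_def)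
  have dj: "(D \<union> X) \<inter> Y = {}" "(D \<union> Y) \<inter> X = {}" "(D \<union> X) \<inter> Z = {}" "(D \<union> Z) \<inter> X = {}"
    "(D \<union> Y) \<inter> Z = {}" "(D \<union> Z) \<inter> Y = {}" "D \<inter> X = {}" "D \<inter> Y = {}" "D \<inter> Z = {}"
    "X \<inter> Y = {}" "X \<inter> Z = {}" "Y \<inter> Z = {}"
    by (auto simp: X_def Y_def Z_def D_def)
  have cA: "card A = card D + card X + card Y"
    using eA(1) dj by (simp add: card_Un_disjoint)
  have cB: "card B = card D + card X + card Z"
    using eB(1) dj by (simp add: card_Un_disjoint)
  have cC: "card C = card D + card Y + card Z"
    using eC(1) dj by (simp add: card_Un_disjoint)
  have cXY: "card X = card Y" "card X = card Z" using cA cB cC c by auto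
  have pos0: "0 < card X"
  proof (rule ccontr)
    assume "\<not> 0 < card X"
    then have "X = {}" "Y = {}" "Z = {}" using cXY by auto
    then have "A = B" using eA eB by simp
    then show False using n by simp
  qed
  have g: "goodS X Y Z" using PC[OF dj(10) dj(11) dj(12) cXY pos0] .
  then consider i where "i \<in> X" "par i Y \<noteq> par i Z" | i where "i \<in> Y" "par i X \<noteq> par i Z"
    | i where "i \<in> Z" "par i X \<noteq> par i Y"
    unfolding goodS_def by blast
  then show ?thesis
  proof cases
    case 1
    have "par i A \<noteq> par i B"
      using 1 par_Un[OF dj(1), of i] par_Un[OF dj(3), of i] eA(1) eB(1) by simp
    moreover have "i \<in> A" "i \<in> B" "i \<notin> C" using 1 by (auto simp: X_def)
    ultimately have "ok3 (labf A i) (labf B i) (labf C i)" by (auto simp: ok3_def labf_def)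
    then show ?thesis by blast
  next
    case 2
    have "par i A \<noteq> par i C"
      using 2 par_Un[OF dj(2), of i] par_Un[OF dj(5), of i] eA(2) eC(1) by simp
    moreover have "i \<in> A" "i \<in> C" "i \<notin> B" using 2 by (auto simp: Y_def)
    ultimately have "ok3 (labf A i) (labf B i) (labf C i)" by (auto simp: ok3_def labf_def)
    then show ?thesis by blast
  next
    case 3
    have "par i B \<noteq> par i C"
      using 3 par_Un[OF dj(4), of i] par_Un[OF dj(6), of i] eB(2) eC(2) by simp
    moreover have "i \<in> B" "i \<in> C" "i \<notin> A" using 3 by (auto simp: Z_def)
    ultimately have "ok3 (labf A i) (labf B i) (labf C i)" by (auto simp: ok3_def labf_def)
    then show ?thesis by blast
  qed
qed

definition vec :: "(pt \<Rightarrow> nat) \<Rightarrow> nat list" where "vec f = map f allpts"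

definition GG :: "nat multiset set" where "GG = {{#0, 1, 2#}, {#0, 0, 1#}, {#0, 0, 2#}}"

definition good3 :: "nat list \<Rightarrow> nat list \<Rightarrow> nat list \<Rightarrow> bool" where
  "good3 x y z = (\<exists>k<11. mset [x!k, y!k, z!k] \<in> GG)"

definition sepB :: "nat list \<Rightarrow> nat list \<Rightarrow> bool" where
  "sepB x y = (\<exists>k<11. x!k = 0 \<and> y!k \<noteq> 0)"

lemma ok3_GG:
  assumes "a \<in> {0,1,2}" "b \<in> {0,1,2}" "c \<in> {0,1,2}" "ok3 a b c"
  shows "mset [a,b,c] \<in> GG"
  using assms by (auto simp: ok3_def GG_def add_mset_commute)

lemma length_vec[simp]: "length (vec f) = 11"
  by (simp add: vec_def length_allpts)

lemma vec_nth: "k < 11 \<Longrightarrow> vec f ! k = f (allpts ! k)"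
  by (simp add: vec_def length_allpts)

lemma ex_idx: "\<exists>k<11. allpts ! k = q"
  using in_allpts[of q] length_allpts by (metis in_set_conv_nth)

lemma good3_vec:
  assumes "\<And>q. f q \<in> {0,1,2}" "\<And>q. g q \<in> {0,1,2}" "\<And>q. h q \<in> {0,1,2}" "ok3 (f q) (g q) (h q)"
  shows "good3 (vec f) (vec g) (vec h)"
proof -
  obtain k where k: "k < 11" "allpts ! k = q" using ex_idx by blast
  have "mset [f q, g q, h q] \<in> GG" using assms ok3_GG by blast
  then show ?thesis unfolding good3_def using k vec_nth by metis
qed

lemma sepB_vec: "f q = 0 \<Longrightarrow> g q \<noteq> 0 \<Longrightarrow> sepB (vec f) (vec g)"
  unfolding sepB_def using ex_idx vec_nth by metis

lemma vec_inj: "vec f = vec g \<Longrightarrow> f = g"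
proof
  fix q assume "vec f = vec g"
  then show "f q = g q" unfolding vec_def using in_allpts[of q] by (metis map_eq_conv)
qed

lemma labf_inj: "labf A = labf B \<Longrightarrow> A = B"
  using labf_nz by (metis subsetI subset_antisym)

lemma set_vec: "(\<And>q. f q \<in> {0,1,2}) \<Longrightarrow> set (vec f) \<subseteq> {0,1,2}"
  unfolding vec_def set_map by (rule image_subsetI)

lemma good3_p12: "good3 x y z \<Longrightarrow> good3 y x z"
  unfolding good3_def by (simp add: add_mset_commute)
lemma good3_p23: "good3 x y z \<Longrightarrow> good3 x z y"
  unfolding good3_def by (simp add: add_mset_commute)

lemma sw_range: "x \<in> {0,1,2} \<Longrightarrow> sw x \<in> {0,1,2}" by (auto simp: sw_def)
lemma sw_labf_range: "sw (labf A q) \<in> {0,1,2}" using labf_range sw_range by blast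
lemma sw_nz: "x \<in> {0,1,2} \<Longrightarrow> sw x \<noteq> 0 \<longleftrightarrow> x \<noteq> 0" by (auto simp: sw_def)
lemma ok3_sw: "a \<in> {0,1,2} \<Longrightarrow> b \<in> {0,1,2} \<Longrightarrow> c \<in> {0,1,2} \<Longrightarrow> ok3 (sw a) (sw b) (sw c) = ok3 a b c"
  by (auto simp: sw_def ok3_def)

definition blockok :: "nat list set \<Rightarrow> bool" where
  "blockok F = ((\<forall>x\<in>F. length x = 11 \<and> set x \<subseteq> {0,1,2}) \<and> (\<forall>x\<in>F. \<forall>y\<in>F. x \<noteq> y \<longrightarrow> sepB x y)
     \<and> (\<forall>x\<in>F. \<forall>y\<in>F. \<forall>z\<in>F. x \<noteq> y \<and> x \<noteq> z \<and> y \<noteq> z \<longrightarrow> good3 x y z))"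

lemma blockok_mono: "blockok F \<Longrightarrow> G \<subseteq> F \<Longrightarrow> blockok G"
  unfolding blockok_def by blast

lemma ex_diff:
  fixes A B :: "pt set"
  assumes "A \<noteq> B" "card A = card B" shows "\<exists>q. q \<in> B \<and> q \<notin> A"
proof (rule ccontr)
  assume "\<not> ?thesis"
  then have "B \<subseteq> A" by blast
  then have "B = A" using card_subset_eq[of A B] assms by simp
  with assms show False by simp
qed

lemma blockok_lab: "blockok {vec (labf A) | A. card A = w}"
  unfolding blockok_def
proof (intro conjI ballI impI)
  fix x assume "x \<in> {vec (labf A) |A. card A = w}"
  then show "length x = 11" by auto
next
  fix x assume "x \<in> {vec (labf A) |A. card A = w}"
  then obtain A where "x = vec (labf A)" by auto
  then show "set x \<subseteq> {0,1,2}" using set_vec[of "labf A"] labf_range by simp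
next
  fix x y assume x: "x \<in> {vec (labf A) |A. card A = w}" and y: "y \<in> {vec (labf A) |A. card A = w}" and "x \<noteq> y"
  then obtain A B where "x = vec (labf A)" "y = vec (labf B)" "card A = w" "card B = w" "A \<noteq> B" by auto
  then obtain q where "q \<in> B" "q \<notin> A" using ex_diff by metis
  then show "sepB x y" using sepB_vec labf_nz \<open>x = vec (labf A)\<close> \<open>y = vec (labf B)\<close> by metis
next
  fix x y z assume x: "x \<in> {vec (labf A) |A. card A = w}" and y: "y \<in> {vec (labf A) |A. card A = w}"
    and z: "z \<in> {vec (labf A) |A. card A = w}" and n: "x \<noteq> y \<and> x \<noteq> z \<and> y \<noteq> z"
  then obtain A B C where e: "x = vec (labf A)" "y = vec (labf B)" "z = vec (labf C)" "card A = w" "card B = w" "card C = w"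
    by auto
  then have "A \<noteq> B" "A \<noteq> C" "B \<noteq> C" using n by auto
  then obtain q where "ok3 (labf A q) (labf B q) (labf C q)" using lab_triple e by metis
  then show "good3 x y z" using good3_vec labf_range e by metis
qed

lemma blockok_sw: "blockok {vec (\<lambda>q. sw (labf A q)) | A. card A = w}"
  unfolding blockok_def
proof (intro conjI ballI impI)
  fix x assume "x \<in> {vec (\<lambda>q. sw (labf A q)) |A. card A = w}"
  then show "length x = 11" by auto
next
  fix x assume "x \<in> {vec (\<lambda>q. sw (labf A q)) |A. card A = w}"
  then obtain A where "x = vec (\<lambda>q. sw (labf A q))" by auto
  then show "set x \<subseteq> {0,1,2}" using set_vec[of "\<lambda>q. sw (labf A q)"] sw_labf_range by simp
next
  fix x y assume x: "x \<in> {vec (\<lambda>q. sw (labf A q)) |A. card A = w}" and y: "y \<in> {vec (\<lambda>q. sw (labf A q)) |A. card A = w}" and "x \<noteq> y"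
  then obtain A B where e: "x = vec (\<lambda>q. sw (labf A q))" "y = vec (\<lambda>q. sw (labf B q))" "card A = w" "card B = w" "A \<noteq> B" by auto
  then obtain q where "q \<in> B" "q \<notin> A" using ex_diff by metis
  then have "sw (labf A q) = 0" "sw (labf B q) \<noteq> 0" using labf_nz sw_nz labf_range by (auto simp: sw_def labf_def)
  then show "sepB x y" using sepB_vec e by metis
next
  fix x y z assume x: "x \<in> {vec (\<lambda>q. sw (labf A q)) |A. card A = w}" and y: "y \<in> {vec (\<lambda>q. sw (labf A q)) |A. card A = w}"
    and z: "z \<in> {vec (\<lambda>q. sw (labf A q)) |A. card A = w}" and n: "x \<noteq> y \<and> x \<noteq> z \<and> y \<noteq> z"
  then obtain A B C where e: "x = vec (\<lambda>q. sw (labf A q))" "y = vec (\<lambda>q. sw (labf B q))" "z = vec (\<lambda>q. sw (labf C q))"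
     "card A = w" "card B = w" "card C = w"
    by auto
  then have "A \<noteq> B" "A \<noteq> C" "B \<noteq> C" using n by auto
  then obtain q where "ok3 (labf A q) (labf B q) (labf C q)" using lab_triple e by metis
  then have "ok3 (sw (labf A q)) (sw (labf B q)) (sw (labf C q))" using ok3_sw labf_range by metis
  then show "good3 x y z" using good3_vec[of "\<lambda>q. sw (labf A q)" "\<lambda>q. sw (labf B q)" "\<lambda>q. sw (labf C q)"] sw_labf_range e by metis
qed

definition ZL :: "pt list list" where
  "ZL = [[P0,P1,P2],
   [P0,P1,P4],
   [P0,P1,P6],
   [P0,P1,P10],
   [P0,P2,P4],
   [P0,P2,P6],
   [P0,P2,P10],
   [P0,P4,P6],
   [P0,P4,P10],
   [P0,P6,P10],
   [P1,P2,P4],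
   [P1,P2,P6],
   [P1,P2,P10],
   [P1,P4,P6],
   [P1,P4,P10],
   [P1,P6,P10],
   [P2,P4,P6],
   [P2,P4,P10],
   [P2,P6,P10],
   [P3,P4,P5],
   [P3,P4,P7],
   [P3,P4,P8],
   [P3,P4,P9],
   [P3,P5,P7],
   [P3,P5,P8],
   [P3,P5,P9],
   [P3,P7,P8],
   [P3,P7,P9],
   [P3,P8,P9],
   [P4,P5,P7],
   [P4,P5,P8],
   [P4,P5,P9],
   [P4,P6,P10],
   [P4,P7,P8],
   [P4,P7,P9],
   [P4,P8,P9],
   [P5,P7,P8]]"

definition ZS :: "pt set set" where "ZS = set (map set ZL)"

lemma ZL_chk1: "list_all (\<lambda>S. distinct S \<and> length S = 3) ZL" by code_simp
lemma ZL_chk2: "distinct (map set ZL)" by code_simp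
lemma ZL_chk3: "list_all (\<lambda>S. list_all (\<lambda>p. list_all (\<lambda>q. p = q \<or>
    length (filter (\<lambda>k. k \<notin> set S \<and> phi k p \<noteq> phi k q) allpts) < 5) S) S) ZL" by code_simp
lemma length_ZL: "length ZL = 37" by (simp add: ZL_def)

lemma card_filter_allpts: "length (filter P allpts) = card {k. P k}"
  using distinct_length_filter[OF allpts_distinct, of P] set_allpts by simp

lemma ZS_card: "S \<in> ZS \<Longrightarrow> card S = 3"
  using ZL_chk1 unfolding ZS_def list_all_iff by (auto simp: distinct_card)

lemma ZS_W: "S \<in> ZS \<Longrightarrow> p \<in> S \<Longrightarrow> q \<in> S \<Longrightarrow> p \<noteq> q \<Longrightarrow> card {k. k \<notin> S \<and> phi k p \<noteq> phi k q} < 5"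
  using ZL_chk3 unfolding ZS_def list_all_iff card_filter_allpts by auto

lemma card_ZS: "card ZS = 37"
  using distinct_card[OF ZL_chk2] length_ZL unfolding ZS_def by simp

definition X1 :: "nat list set" where "X1 = {vec (labf A) | A. card A = 7}"
definition X2 :: "nat list set" where "X2 = {vec (\<lambda>q. sw (labf A q)) | A. card A = 7}"
definition ZZ :: "nat list set" where "ZZ = {vec (labf S) | S. S \<in> ZS}"

lemma blockok_X1: "blockok X1" unfolding X1_def by (rule blockok_lab)
lemma blockok_X2: "blockok X2" unfolding X2_def by (rule blockok_sw)
lemma blockok_ZZ: "blockok ZZ"
  by (rule blockok_mono[OF blockok_lab[of 3]]) (auto simp: ZZ_def ZS_card)

lemma X12_form:
  assumes "x \<in> X1 \<union> X2"
  shows "\<exists>A f. card A = 7 \<and> x = vec f \<and> (\<forall>q. f q \<in> {0,1,2}) \<and> (\<forall>q. f q \<noteq> 0 \<longleftrightarrow> q \<in> A)"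
proof -
  { assume "x \<in> X1"
    then obtain A where "x = vec (labf A)" "card A = 7" by (auto simp: X1_def)
    then have ?thesis using labf_range labf_nz by blast }
  moreover
  { assume "x \<in> X2"
    then obtain A where "x = vec (\<lambda>q. sw (labf A q))" "card A = 7" by (auto simp: X2_def)
    moreover have "\<forall>q. sw (labf A q) \<noteq> 0 \<longleftrightarrow> q \<in> A" using sw_nz labf_range labf_nz by metis
    ultimately have ?thesis using sw_labf_range by blast }
  ultimately show ?thesis using assms by blast
qed

lemma ZZ_form: "z \<in> ZZ \<Longrightarrow> \<exists>S. S \<in> ZS \<and> card S = 3 \<and> z = vec (labf S)"
  by (auto simp: ZZ_def ZS_card)

lemma sep_ZX: assumes "z \<in> ZZ" "x \<in> X1 \<union> X2" shows "sepB z x"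
proof -
  obtain S where S: "card S = 3" "z = vec (labf S)" using ZZ_form[OF assms(1)] by blast
  from X12_form[OF assms(2)] obtain A f where A: "card A = 7" "x = vec f" "\<forall>q. f q \<noteq> 0 \<longleftrightarrow> q \<in> A" by blast
  have "\<not> A \<subseteq> S" using card_mono[of S A] S A by auto
  then obtain q where "q \<in> A" "q \<notin> S" by blast
  then have "labf S q = 0" "f q \<noteq> 0" using A(3) by (auto simp: labf_def)
  then have "sepB (vec (labf S)) (vec f)" by (rule sepB_vec)
  then show ?thesis using A S by simp
qed

lemma good_ZZX: assumes "z \<in> ZZ" "z' \<in> ZZ" "x \<in> X1 \<union> X2" shows "good3 z z' x"
proof -
  obtain S where S: "card S = 3" "z = vec (labf S)" using ZZ_form[OF assms(1)] by blast
  obtain S' where S': "card S' = 3" "z' = vec (labf S')" using ZZ_form[OF assms(2)] by blast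
  from X12_form[OF assms(3)] obtain A f where A: "card A = 7" "x = vec f" "\<forall>q. f q \<in> {0,1,2}" "\<forall>q. f q \<noteq> 0 \<longleftrightarrow> q \<in> A"
    by blast
  have "card (S \<union> S') \<le> 6" using card_Un_le[of S S'] S S' by simp
  then have "\<not> A \<subseteq> S \<union> S'" using card_mono[of "S \<union> S'" A] A by auto
  then obtain q where q: "q \<in> A" "q \<notin> S" "q \<notin> S'" by blast
  then have "ok3 (labf S q) (labf S' q) (f q)" using A labf_nz by (auto simp: ok3_def)
  then have "good3 (vec (labf S)) (vec (labf S')) (vec f)"
    by (intro good3_vec[of "labf S" "labf S'" f q] labf_range) (use A(3) in auto)
  then show ?thesis using A S S' by simp
qed

lemma L4:
  assumes S: "S \<in> ZS" and cA: "card A = 7" and cB: "card B = 7"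
  shows "\<exists>q. ok3 (sw (labf A q)) (labf S q) (labf B q)"
proof (rule ccontr)
  assume H: "\<not> ?thesis"
  have cS: "card S = 3" using ZS_card S by blast
  have swv: "\<And>q. q \<in> A \<Longrightarrow> sw (labf A q) = (if par q A then 1 else 2)" by (simp add: labf_def sw_def)
  have a: "\<And>q. q \<in> A \<Longrightarrow> q \<notin> S \<Longrightarrow> q \<in> B"
  proof (rule ccontr)
    fix q assume "q \<in> A" "q \<notin> S" "q \<notin> B"
    then have "ok3 (sw (labf A q)) (labf S q) (labf B q)" using swv by (auto simp: ok3_def labf_def)
    then show False using H by blast
  qed
  have b: "\<And>q. q \<in> B \<Longrightarrow> q \<notin> S \<Longrightarrow> q \<in> A"
  proof (rule ccontr)
    fix q assume "q \<in> B" "q \<notin> S" "q \<notin> A"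
    then have "ok3 (sw (labf A q)) (labf S q) (labf B q)" by (auto simp: ok3_def labf_def sw_def)
    then show False using H by blast
  qed
  have d: "\<And>q. q \<in> A \<Longrightarrow> q \<in> B \<Longrightarrow> q \<notin> S \<Longrightarrow> par q A \<noteq> par q B"
  proof (rule ccontr)
    fix q assume "q \<in> A" "q \<in> B" "q \<notin> S" "\<not> par q A \<noteq> par q B"
    then have "ok3 (sw (labf A q)) (labf S q) (labf B q)" by (auto simp: ok3_def labf_def sw_def)
    then show False using H by blast
  qed
  show False
  proof (cases "A = B")
    case True
    have "\<not> A \<subseteq> S" using card_mono[of S A] cS cA by auto
    then obtain q where "q \<in> A" "q \<notin> S" by blast
    then show False using d True by blast
  next
    case False
    have sub1: "A - B \<subseteq> S" using a by blast
    have sub2: "B - A \<subseteq> S" using b by blast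
    have cAB: "card (A - B) = card (B - A)"
      using card_Diff_subset_Int[of A B] card_Diff_subset_Int[of B A] cA cB by (simp add: Int_commute)
    have ne: "A - B \<noteq> {}"
    proof
      assume "A - B = {}"
      then have "A \<subseteq> B" by blast
      then have "A = B" using card_subset_eq[of B A] cA cB by simp
      then show False using False by simp
    qed
    have "card (A - B) + card (B - A) = card ((A - B) \<union> (B - A))"
      by (rule card_Un_disjoint[symmetric]) auto
    also have "\<dots> \<le> card S" using sub1 sub2 by (intro card_mono) auto
    finally have "card (A - B) + card (B - A) \<le> 3" using cS by simp
    moreover have "card (A - B) \<noteq> 0" using ne by simp
    ultimately have c1: "card (A - B) = 1" "card (B - A) = 1" using cAB by linarith+
    obtain p where p: "A - B = {p}" using c1(1) card_1_singletonE by blast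
    obtain p' where p': "B - A = {p'}" using c1(2) card_1_singletonE by blast
    define E where "E = A \<inter> B"
    have eA: "A = E \<union> {p}" and eB: "B = E \<union> {p'}" using p p' by (auto simp: E_def)
    have pE: "E \<inter> {p} = {}" "E \<inter> {p'} = {}" using p p' by (auto simp: E_def)
    have pp: "p \<in> S" "p' \<in> S" "p \<noteq> p'" using p p' sub1 sub2 by auto
    have cE: "card E = 6" using cA eA pE by (simp add: card_Un_disjoint)
    have cES: "card (E \<inter> S) \<le> 1"
    proof -
      have "E \<inter> S \<subseteq> S - {p, p'}" using pE by auto
      then have "card (E \<inter> S) \<le> card (S - {p, p'})" by (intro card_mono) auto
      also have "\<dots> = 1" using cS pp by (simp add: card_Diff_subset)
      finally show ?thesis .
    qed
    have cK: "card (E - S) \<ge> 5"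
      using card_Diff_subset_Int[of E S] cE cES by (simp add: card_Diff_subset_Int) 
    have "E - S \<subseteq> {k. k \<notin> S \<and> phi k p \<noteq> phi k p'}"
    proof
      fix k assume k: "k \<in> E - S"
      then have "par k A \<noteq> par k B" using d by (auto simp: E_def)
      moreover have "par k A = (par k E \<noteq> phi k p)" using par_Un[OF pE(1)] par_single eA by simp
      moreover have "par k B = (par k E \<noteq> phi k p')" using par_Un[OF pE(2)] par_single eB by simp
      ultimately show "k \<in> {k. k \<notin> S \<and> phi k p \<noteq> phi k p'}" using k by auto
    qed
    then have "card (E - S) \<le> card {k. k \<notin> S \<and> phi k p \<noteq> phi k p'}" by (intro card_mono) auto
    also have "\<dots> < 5" using ZS_W[OF S pp] .
    finally show False using cK by simp
  qed
qed

lemma good_mid: assumes "a \<in> X2" "z \<in> ZZ" "b \<in> X1" shows "good3 a z b"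
proof -
  obtain A where A: "a = vec (\<lambda>q. sw (labf A q))" "card A = 7" using assms by (auto simp: X2_def)
  obtain B where B: "b = vec (labf B)" "card B = 7" using assms by (auto simp: X1_def)
  obtain S where S: "S \<in> ZS" "z = vec (labf S)" using assms by (auto simp: ZZ_def)
  obtain q where "ok3 (sw (labf A q)) (labf S q) (labf B q)" using L4 S A B by blast
  then have "good3 (vec (\<lambda>q. sw (labf A q))) (vec (labf S)) (vec (labf B))"
    by (intro good3_vec[of "\<lambda>q. sw (labf A q)" "labf S" "labf B" q] labf_range sw_labf_range)
  then show ?thesis using A B S by simp
qed

lemma choose_11_7: "(11::nat) choose 7 = 330"
proof -
  have "(11::nat) choose 7 = fact 11 div (fact 7 * fact 4)"
    using binomial_fact'[of 7 11] by simp
  also have "\<dots> = 330" by (simp add: fact_numeral)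
  finally show ?thesis .
qed

lemma card_7sets: "card {A :: pt set. card A = 7} = 330"
  using n_subsets[of "UNIV :: pt set" 7] card_UNIV_pt choose_11_7 by simp

lemma card_X1: "card X1 = 330"
proof -
  have "X1 = (\<lambda>A. vec (labf A)) ` {A. card A = 7}" by (auto simp: X1_def)
  moreover have "inj_on (\<lambda>A. vec (labf A)) {A. card A = 7}"
    by (rule inj_onI) (metis vec_inj labf_inj)
  ultimately show ?thesis using card_image card_7sets by metis
qed

lemma sw_labf_inj: "(\<lambda>q. sw (labf A q)) = (\<lambda>q. sw (labf B q)) \<Longrightarrow> A = B"
proof -
  assume h: "(\<lambda>q. sw (labf A q)) = (\<lambda>q. sw (labf B q))"
  have "\<forall>q. q \<in> A \<longleftrightarrow> q \<in> B"
  proof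
    fix q have "sw (labf A q) = sw (labf B q)" using h by metis
    then show "q \<in> A \<longleftrightarrow> q \<in> B" using sw_nz labf_range labf_nz by metis
  qed
  then show ?thesis by blast
qed

lemma card_X2: "card X2 = 330"
proof -
  have "X2 = (\<lambda>A. vec (\<lambda>q. sw (labf A q))) ` {A. card A = 7}" by (auto simp: X2_def)
  moreover have "inj_on (\<lambda>A. vec (\<lambda>q. sw (labf A q))) {A. card A = 7}"
    by (rule inj_onI) (metis vec_inj sw_labf_inj)
  ultimately show ?thesis using card_image card_7sets by metis
qed

lemma card_ZZ: "card ZZ = 37"
proof -
  have "ZZ = (\<lambda>A. vec (labf A)) ` ZS" by (auto simp: ZZ_def)
  moreover have "inj_on (\<lambda>A. vec (labf A)) ZS"
    by (rule inj_onI) (metis vec_inj labf_inj)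
  ultimately show ?thesis using card_image card_ZS by metis
qed

lemma nz_count: "(\<forall>q. f q \<noteq> 0 \<longleftrightarrow> q \<in> A) \<Longrightarrow> length (filter (\<lambda>x. x \<noteq> 0) (vec f)) = card A"
  unfolding vec_def by (simp add: filter_map comp_def card_filter_allpts)

lemma wt_X12: "x \<in> X1 \<union> X2 \<Longrightarrow> length (filter (\<lambda>x. x \<noteq> 0) x) = 7"
  using X12_form nz_count by metis

lemma wt_ZZ: "z \<in> ZZ \<Longrightarrow> length (filter (\<lambda>x. x \<noteq> 0) z) = 3"
  using ZZ_form nz_count labf_nz by metis

definition fam :: "nat \<Rightarrow> nat \<Rightarrow> nat list set" where
  "fam j b = (if b < j then X1 else if b = j then ZZ else X2)"

definition TB :: "nat \<Rightarrow> nat list list set" where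
  "TB j = {bs. length bs = 142 \<and> (\<forall>b<142. bs ! b \<in> fam j b)}"

definition TT :: "nat list set" where "TT = concat ` (\<Union>j<142. TB j)"

lemma blockok_fam: "blockok (fam j b)"
  by (simp add: fam_def blockok_X1 blockok_X2 blockok_ZZ)

lemma fam_elem: "x \<in> fam j b \<Longrightarrow> length x = 11 \<and> set x \<subseteq> {0,1,2}"
  using blockok_fam[of j b] unfolding blockok_def by blast

lemma fam_jj: "fam j j = ZZ" by (simp add: fam_def)
lemma fam_ne: "b \<noteq> j \<Longrightarrow> fam j b \<subseteq> X1 \<union> X2" by (auto simp: fam_def)
lemma fam_lo: "j < b \<Longrightarrow> fam j b = X2" by (simp add: fam_def)
lemma fam_hi: "b < j \<Longrightarrow> fam j b = X1" by (simp add: fam_def)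

lemma TB_blocks: "bs \<in> TB j \<Longrightarrow> x \<in> set bs \<Longrightarrow> length x = 11 \<and> set x \<subseteq> {0,1,2}"
proof -
  assume a: "bs \<in> TB j" "x \<in> set bs"
  then obtain b where b: "b < length bs" "x = bs ! b" by (metis in_set_conv_nth)
  have "length bs = 142" using a unfolding TB_def by simp
  then have "x \<in> fam j b" using a b unfolding TB_def by simp
  then show ?thesis using fam_elem by blast
qed

lemma concat_nth11:
  "(\<forall>x\<in>set bs. length x = 11) \<Longrightarrow> b < length bs \<Longrightarrow> k < 11 \<Longrightarrow> concat bs ! (11*b + k) = bs ! b ! k"
proof (induction bs arbitrary: b)
  case Nil then show ?case by simp
next
  case (Cons x xs)
  show ?case
  proof (cases b)
    case 0 then show ?thesis using Cons.prems by (simp add: nth_append)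
  next
    case (Suc b')
    have "concat (x#xs) ! (11*b + k) = concat xs ! (11*b' + k)"
      using Cons.prems Suc by (simp add: nth_append)
    then show ?thesis using Cons Suc by simp
  qed
qed

lemma length_concat11: "(\<forall>x\<in>set bs. length x = 11) \<Longrightarrow> length (concat bs) = 11 * length bs"
  by (induction bs) auto

lemma concat_inj11:
  "(\<forall>x\<in>set bs. length x = n) \<Longrightarrow> (\<forall>x\<in>set bs'. length x = n) \<Longrightarrow> length bs = length bs'
   \<Longrightarrow> concat bs = concat bs' \<Longrightarrow> bs = bs'"
proof (induction bs arbitrary: bs')
  case Nil then show ?case by simp
next
  case (Cons x xs)
  obtain y ys where bs': "bs' = y # ys" using Cons.prems(3) by (cases bs') auto
  then have "x @ concat xs = y @ concat ys" "length x = length y" using Cons.prems by auto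
  then have xy: "x = y" "concat xs = concat ys" by auto
  have "xs = ys" by (rule Cons.IH) (use Cons.prems bs' xy in auto)
  then show ?case using bs' xy by simp
qed

lemma TB_nth: assumes "bs \<in> TB j" "b < 142" "k < 11" shows "concat bs ! (11*b + k) = bs ! b ! k"
proof -
  have "\<forall>x\<in>set bs. length x = 11" using TB_blocks[OF assms(1)] by blast
  moreover have "length bs = 142" using assms(1) unfolding TB_def by simp
  ultimately show ?thesis using concat_nth11[of bs b k] assms(2,3) by simp
qed

lemma coord_bound: "b < 142 \<Longrightarrow> k < 11 \<Longrightarrow> 11*b + k < (1562::nat)" by linarith

lemma lift_sep:
  assumes "bs \<in> TB j" "bs' \<in> TB j'" "b < 142" "sepB (bs!b) (bs'!b)"
  shows "\<exists>i<1562. concat bs ! i = 0 \<and> concat bs' ! i \<noteq> 0"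
proof -
  obtain k where k: "k < 11" "bs!b!k = 0" "bs'!b!k \<noteq> 0" using assms(4) unfolding sepB_def by blast
  have l: "length bs = 142" "length bs' = 142" using assms unfolding TB_def by auto
  have "concat bs ! (11*b+k) = bs!b!k" "concat bs' ! (11*b+k) = bs'!b!k"
    using TB_nth assms(1,2,3) k(1) by auto
  then show ?thesis using k coord_bound[OF assms(3) k(1)] by metis
qed

lemma lift_good:
  assumes "bs \<in> TB j" "bs' \<in> TB j'" "bs'' \<in> TB j''" "b < 142" "good3 (bs!b) (bs'!b) (bs''!b)"
  shows "\<exists>i<1562. mset [concat bs ! i, concat bs' ! i, concat bs'' ! i] \<in> {{#0, 1, 2#}, {#0, 0, 1#}, {#0, 0, 2#}}"
proof -
  obtain k where k: "k < 11" "mset [bs!b!k, bs'!b!k, bs''!b!k] \<in> GG" using assms(5) unfolding good3_def by blast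
  have l: "length bs = 142" "length bs' = 142" "length bs'' = 142" using assms unfolding TB_def by auto
  have "concat bs ! (11*b+k) = bs!b!k" "concat bs' ! (11*b+k) = bs'!b!k" "concat bs'' ! (11*b+k) = bs''!b!k"
    using TB_nth assms(1,2,3,4) k(1) by auto
  then show ?thesis using k coord_bound[OF assms(4) k(1)] unfolding GG_def by metis
qed

lemma TB_mem: "bs \<in> TB j \<Longrightarrow> b < 142 \<Longrightarrow> bs ! b \<in> fam j b"
  unfolding TB_def by blast

lemma main_sep:
  assumes "bs \<in> TB j" "bs' \<in> TB j'" "j < 142" "j' < 142" "bs \<noteq> bs'"
  shows "\<exists>b<142. sepB (bs!b) (bs'!b)"
proof (cases "j = j'")
  case True
  have l: "length bs = 142" "length bs' = 142" using assms unfolding TB_def by auto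
  then obtain b where b: "b < 142" "bs!b \<noteq> bs'!b" using assms(5) nth_equalityI by metis
  have "bs!b \<in> fam j b" "bs'!b \<in> fam j b" using TB_mem assms True b by auto
  then have "sepB (bs!b) (bs'!b)" using blockok_fam[of j b] b unfolding blockok_def by blast
  then show ?thesis using b by blast
next
  case False
  have "bs!j \<in> ZZ" using TB_mem[OF assms(1) assms(3)] fam_jj by simp
  moreover have "bs'!j \<in> X1 \<union> X2" using TB_mem[OF assms(2) assms(3)] fam_ne False by blast
  ultimately show ?thesis using sep_ZX assms(3) by blast
qed

lemma sep_good:
  assumes "sepB x y" "length y = 11" "set y \<subseteq> {0,1,2}"
  shows "good3 x x y" "good3 x y x" "good3 y x x"
proof -
  obtain k where k: "k < 11" "x!k = 0" "y!k \<noteq> 0" using assms(1) unfolding sepB_def by blast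
  have "y!k \<in> set y" using assms(2) k(1) by simp
  then have "y!k \<in> {0,1,2}" using assms(3) by blast
  then have "y!k = 1 \<or> y!k = 2" using k by auto
  then have "mset [x!k, x!k, y!k] \<in> GG" "mset [x!k, y!k, x!k] \<in> GG" "mset [y!k, x!k, x!k] \<in> GG"
    using k by (auto simp: GG_def add_mset_commute)
  then show "good3 x x y" "good3 x y x" "good3 y x x" unfolding good3_def using k(1) by blast+
qed

lemma good3_perms: "good3 x y z \<Longrightarrow> good3 x z y \<and> good3 y x z \<and> good3 y z x \<and> good3 z x y \<and> good3 z y x"
  using good3_p12 good3_p23 by metis

lemma main_good:
  assumes t: "bs \<in> TB j1" "bs' \<in> TB j2" "bs'' \<in> TB j3" and j: "j1 < 142" "j2 < 142" "j3 < 142"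
    and n: "bs \<noteq> bs'" "bs \<noteq> bs''" "bs' \<noteq> bs''"
  shows "\<exists>b<142. good3 (bs!b) (bs'!b) (bs''!b)"
proof -
  have mid: "good3 (xs!m) (ys!m) (zs!m)"
    if "xs \<in> TB a" "ys \<in> TB m" "zs \<in> TB c" "a < m" "m < c" "m < 142" for xs ys zs a m c
  proof -
    have "xs!m \<in> X2" using TB_mem[OF that(1) that(6)] fam_lo[OF that(4)] by simp
    moreover have "ys!m \<in> ZZ" using TB_mem[OF that(2) that(6)] fam_jj by simp
    moreover have "zs!m \<in> X1" using TB_mem[OF that(3) that(6)] fam_hi[OF that(5)] by simp
    ultimately show ?thesis using good_mid by blast
  qed
  have two: "good3 (xs!a) (ys!a) (zs!a)"
    if "xs \<in> TB a" "ys \<in> TB a" "zs \<in> TB c" "a \<noteq> c" "a < 142" for xs ys zs a c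
  proof -
    have "xs!a \<in> ZZ" "ys!a \<in> ZZ" using TB_mem[OF that(1) that(5)] TB_mem[OF that(2) that(5)] fam_jj by auto
    moreover have "zs!a \<in> X1 \<union> X2" using TB_mem[OF that(3) that(5)] fam_ne that(4) by blast
    ultimately show ?thesis using good_ZZX by blast
  qed
  consider "j1 = j2" "j2 = j3" | "j1 = j2" "j2 \<noteq> j3" | "j1 = j3" "j2 \<noteq> j3" | "j2 = j3" "j1 \<noteq> j2"
    | "j1 \<noteq> j2" "j1 \<noteq> j3" "j2 \<noteq> j3" by blast
  then show ?thesis
  proof cases
    case 1
    have l: "length bs = 142" "length bs' = 142" using t unfolding TB_def by auto
    then obtain b where b: "b < 142" "bs!b \<noteq> bs'!b" using n(1) nth_equalityI by metis
    have F: "bs!b \<in> fam j1 b" "bs'!b \<in> fam j1 b" "bs''!b \<in> fam j1 b" using TB_mem t 1 b by auto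
    have bo: "blockok (fam j1 b)" by (rule blockok_fam)
    have el: "length (bs'!b) = 11" "set (bs'!b) \<subseteq> {0,1,2}" "length (bs!b) = 11" "set (bs!b) \<subseteq> {0,1,2}"
      using fam_elem F by auto
    have s1: "sepB (bs!b) (bs'!b)" "sepB (bs'!b) (bs!b)" using bo F b unfolding blockok_def by metis+
    consider "bs''!b = bs!b" | "bs''!b = bs'!b" | "bs''!b \<noteq> bs!b" "bs''!b \<noteq> bs'!b" by blast
    then show ?thesis
    proof cases
      case 1
      then show ?thesis using sep_good(2)[OF s1(1) el(1,2)] b by auto
    next
      case 2
      have "good3 (bs!b) (bs'!b) (bs'!b)" using sep_good(3)[OF s1(2) el(3,4)] .
      then show ?thesis using 2 b by auto
    next
      case 3
      then show ?thesis using bo F b unfolding blockok_def by metis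
    qed
  next
    case 2
    then show ?thesis using two[OF t(1) _ t(3)] t(2) j by blast
  next
    case 3
    have "good3 (bs!j1) (bs''!j1) (bs'!j1)" using two[OF t(1) _ t(2)] t(3) j 3 by blast
    then show ?thesis using good3_perms j by blast
  next
    case 4
    have "good3 (bs'!j2) (bs''!j2) (bs!j2)" using two[OF t(2) _ t(1)] t(3) j 4 by metis
    then show ?thesis using good3_perms j by blast
  next
    case 5
    then consider "j1 < j2" "j2 < j3" | "j1 < j3" "j3 < j2" | "j2 < j1" "j1 < j3"
      | "j2 < j3" "j3 < j1" | "j3 < j1" "j1 < j2" | "j3 < j2" "j2 < j1" by linarith
    then show ?thesis
    proof cases
      case 1 then show ?thesis using mid[OF t(1) t(2) t(3)] j by blast
    next
      case 2
      have "good3 (bs!j3) (bs''!j3) (bs'!j3)" using mid[OF t(1) t(3) t(2)] 2 j by blast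
      then show ?thesis using good3_perms j by blast
    next
      case 3
      have "good3 (bs'!j1) (bs!j1) (bs''!j1)" using mid[OF t(2) t(1) t(3)] 3 j by blast
      then show ?thesis using good3_perms j by blast
    next
      case 4
      have "good3 (bs'!j3) (bs''!j3) (bs!j3)" using mid[OF t(2) t(3) t(1)] 4 j by blast
      then show ?thesis using good3_perms j by blast
    next
      case 5
      have "good3 (bs''!j1) (bs!j1) (bs'!j1)" using mid[OF t(3) t(1) t(2)] 5 j by blast
      then show ?thesis using good3_perms j by blast
    next
      case 6
      have "good3 (bs''!j2) (bs'!j2) (bs!j2)" using mid[OF t(3) t(2) t(1)] 6 j by blast
      then show ?thesis using good3_perms j by blast
    qed
  qed
qed

lemma card_listF:
  assumes "\<And>b. finite (F b)"
  shows "card {bs. length bs = n \<and> (\<forall>b<n. bs!b \<in> F b)} = (\<Prod>b<n. card (F b))"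
  using assms
proof (induction n arbitrary: F)
  case 0
  have "{bs. length bs = 0 \<and> (\<forall>b<0. bs!b \<in> F b)} = {[]}" by auto
  then show ?case by simp
next
  case (Suc n)
  let ?R = "{xs. length xs = n \<and> (\<forall>b<n. xs!b \<in> F (Suc b))}"
  have e: "{bs. length bs = Suc n \<and> (\<forall>b<Suc n. bs!b \<in> F b)} = (\<lambda>(x,xs). x#xs) ` (F 0 \<times> ?R)"
  proof
    show "{bs. length bs = Suc n \<and> (\<forall>b<Suc n. bs!b \<in> F b)} \<subseteq> (\<lambda>(x,xs). x#xs) ` (F 0 \<times> ?R)"
    proof
      fix bs assume "bs \<in> {bs. length bs = Suc n \<and> (\<forall>b<Suc n. bs!b \<in> F b)}"
      then have h: "length bs = Suc n" "\<forall>b<Suc n. bs!b \<in> F b" by auto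
      then obtain x xs where bs: "bs = x # xs" "length xs = n" by (metis length_Suc_conv)
      have "x \<in> F 0" using h bs by auto
      moreover have "\<forall>b<n. xs!b \<in> F (Suc b)" using h bs by auto
      ultimately show "bs \<in> (\<lambda>(x,xs). x#xs) ` (F 0 \<times> ?R)" using bs by auto
    qed
  next
    show "(\<lambda>(x,xs). x#xs) ` (F 0 \<times> ?R) \<subseteq> {bs. length bs = Suc n \<and> (\<forall>b<Suc n. bs!b \<in> F b)}"
    proof
      fix bs assume "bs \<in> (\<lambda>(x,xs). x#xs) ` (F 0 \<times> ?R)"
      then obtain x xs where bs: "bs = x # xs" "x \<in> F 0" "length xs = n" "\<forall>b<n. xs!b \<in> F (Suc b)" by auto
      have "\<forall>b<Suc n. bs!b \<in> F b"
      proof (intro allI impI)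
        fix b assume "b < Suc n"
        then show "bs!b \<in> F b" using bs by (cases b) auto
      qed
      then show "bs \<in> {bs. length bs = Suc n \<and> (\<forall>b<Suc n. bs!b \<in> F b)}" using bs by simp
    qed
  qed
  have inj: "inj_on (\<lambda>(x,xs). x#xs) (F 0 \<times> ?R)" by (auto simp: inj_on_def)
  have "card {bs. length bs = Suc n \<and> (\<forall>b<Suc n. bs!b \<in> F b)} = card (F 0 \<times> ?R)"
    unfolding e by (rule card_image[OF inj])
  also have "\<dots> = card (F 0) * card ?R" by (rule card_cartesian_product)
  also have "card ?R = (\<Prod>b<n. card (F (Suc b)))" using Suc.IH[of "\<lambda>b. F (Suc b)"] Suc.prems by blast
  finally show ?case by (simp only: prod.lessThan_Suc_shift)
qed

lemma card_fam: "card (fam j b) = (if b = j then 37 else 330)"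
  by (simp add: fam_def card_X1 card_X2 card_ZZ)

lemma finite_fam: "finite (fam j b)"
  using card_fam[of j b] by (metis card_eq_0_iff zero_neq_numeral)

lemma prod_special: "j < n \<Longrightarrow> (\<Prod>b<n. (if b = j then (a::nat) else c)) = a * c ^ (n - 1)"
proof -
  assume j: "j < n"
  have "(\<Prod>b<n. (if b = j then a else c)) = (if j = j then a else c) * (\<Prod>b\<in>{..<n} - {j}. (if b = j then a else c))"
    using j by (intro prod.remove) auto
  also have "(\<Prod>b\<in>{..<n} - {j}. (if b = j then a else c)) = (\<Prod>b\<in>{..<n} - {j}. c)"
    by (rule prod.cong) auto
  also have "\<dots> = c ^ (n - 1)" using j by simp
  finally show ?thesis by simp
qed

lemma sum_special: "j < n \<Longrightarrow> (\<Sum>b<n. (if b = j then (a::nat) else c)) = a + c * (n - 1)"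
proof -
  assume j: "j < n"
  have "(\<Sum>b<n. (if b = j then a else c)) = (if j = j then a else c) + (\<Sum>b\<in>{..<n} - {j}. (if b = j then a else c))"
    using j by (intro sum.remove) auto
  also have "(\<Sum>b\<in>{..<n} - {j}. (if b = j then a else c)) = (\<Sum>b\<in>{..<n} - {j}. c)"
    by (rule sum.cong) auto
  also have "\<dots> = c * (n - 1)" using j by simp
  finally show ?thesis by simp
qed

lemma card_TB: "j < 142 \<Longrightarrow> card (TB j) = 37 * 330 ^ 141"
proof -
  assume j: "j < 142"
  have "card (TB j) = (\<Prod>b<142. card (fam j b))"
    unfolding TB_def by (rule card_listF) (rule finite_fam)
  also have "\<dots> = (\<Prod>b<142. (if b = j then 37 else 330))" by (simp only: card_fam)
  also have "\<dots> = 37 * 330 ^ (142 - 1)" using prod_special[OF j] .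
  finally show ?thesis by simp
qed

lemma finite_TB: "j < 142 \<Longrightarrow> finite (TB j)"
  using card_TB[of j] by (metis card_eq_0_iff mult_is_0 power_not_zero zero_neq_numeral)

lemma TB_disj: assumes "j < 142" "j' < 142" "j \<noteq> j'" shows "TB j \<inter> TB j' = {}"
proof (rule ccontr)
  assume "TB j \<inter> TB j' \<noteq> {}"
  then obtain bs where bs: "bs \<in> TB j" "bs \<in> TB j'" by blast
  have "bs!j \<in> ZZ" using TB_mem[OF bs(1) assms(1)] fam_jj by simp
  moreover have "bs!j \<in> X1 \<union> X2" using TB_mem[OF bs(2) assms(1)] fam_ne assms(3) by blast
  ultimately show False using wt_ZZ wt_X12 by fastforce
qed

lemma card_UTB: "card (\<Union>j<142. TB j) = 142 * (37 * 330 ^ 141)"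
proof -
  have "card (\<Union>j<142. TB j) = (\<Sum>j<142. card (TB j))"
    by (rule card_UN_disjoint) (auto simp: finite_TB TB_disj)
  also have "\<dots> = (\<Sum>j<(142::nat). 37 * 330 ^ 141)" by (rule sum.cong) (auto simp: card_TB)
  also have "\<dots> = 142 * (37 * 330 ^ 141)" by (simp only: sum_constant card_lessThan of_nat_id)
  finally show ?thesis .
qed

lemma TB_len: "bs \<in> TB j \<Longrightarrow> length bs = 142" unfolding TB_def by simp

lemma card_TT: "card TT = 142 * (37 * 330 ^ 141)"
proof -
  have "inj_on concat (\<Union>j<142. TB j)"
  proof (rule inj_onI)
    fix bs bs' assume a: "bs \<in> (\<Union>j<142. TB j)" "bs' \<in> (\<Union>j<142. TB j)" "concat bs = concat bs'"
    then obtain j j' where "bs \<in> TB j" "bs' \<in> TB j'" by blast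
    then show "bs = bs'" using concat_inj11[of bs 11 bs'] TB_blocks TB_len a(3) by metis
  qed
  then show ?thesis unfolding TT_def using card_image card_UTB by metis
qed

lemma len_filter_concat: "length (filter P (concat bs)) = sum_list (map (\<lambda>x. length (filter P x)) bs)"
  by (induction bs) auto

lemma weight_TB: assumes "bs \<in> TB j" "j < 142" shows "weight (concat bs) = 990"
proof -
  have "weight (concat bs) = length (filter (\<lambda>x. x \<noteq> 0) (concat bs))"
    by (simp add: weight_def length_filter_conv_card)
  also have "\<dots> = sum_list (map (\<lambda>x. length (filter (\<lambda>x. x \<noteq> 0) x)) bs)" by (rule len_filter_concat)
  also have "\<dots> = (\<Sum>b<142. length (filter (\<lambda>x. x \<noteq> 0) (bs ! b)))"
    using TB_len[OF assms(1)] by (simp add: sum_list_sum_nth atLeast0LessThan)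
  also have "\<dots> = (\<Sum>b<142. (if b = j then 3 else 7))"
  proof (rule sum.cong)
    fix b assume "b \<in> {..<(142::nat)}"
    then have b: "b < 142" by simp
    show "length (filter (\<lambda>x. x \<noteq> 0) (bs ! b)) = (if b = j then 3 else 7)"
    proof (cases "b = j")
      case True then show ?thesis using TB_mem[OF assms(1) b] fam_jj wt_ZZ by simp
    next
      case False then show ?thesis using TB_mem[OF assms(1) b] fam_ne[OF False] wt_X12 by auto
    qed
  qed simp
  also have "\<dots> = 3 + 7 * (142 - 1)" using sum_special[OF assms(2)] .
  finally show ?thesis by simp
qed

lemma TT_tern: "TT \<subseteq> ternary_vecs 1562"
proof
  fix v assume "v \<in> TT"
  then obtain bs j where bs: "bs \<in> TB j" "v = concat bs" unfolding TT_def by blast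
  have "length v = 1562" using length_concat11[of bs] TB_blocks[OF bs(1)] TB_len[OF bs(1)] bs(2) by simp
  moreover have "set v \<subseteq> {0,1,2}" using TB_blocks[OF bs(1)] bs(2) by auto
  ultimately show "v \<in> ternary_vecs 1562" by (simp add: ternary_vecs_def)
qed

theorem lemma3p8:
  shows "\<exists>T. admissible 1562 T \<and> card T = 142 * 37 * (11 choose 7) ^ 141 \<and>
             (\<forall>t\<in>T. weight t = 990)"
proof (intro exI conjI)
  show "card TT = 142 * 37 * (11 choose 7) ^ 141"
    by (simp only: card_TT choose_11_7 mult.assoc)
  show "\<forall>t\<in>TT. weight t = 990"
    unfolding TT_def using weight_TB by blast
  show "admissible 1562 TT"
    unfolding admissible_def
  proof (intro conjI ballI impI)
    show "TT \<subseteq> ternary_vecs 1562" by (rule TT_tern)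
  next
    fix s s' assume a: "s \<in> TT" "s' \<in> TT" "s \<noteq> s'"
    then obtain bs j bs' j' where b: "bs \<in> TB j" "j < 142" "s = concat bs" "bs' \<in> TB j'" "j' < 142" "s' = concat bs'"
      unfolding TT_def by blast
    then have ne: "bs \<noteq> bs'" using a by blast
    obtain b where "b < 142" "sepB (bs!b) (bs'!b)" using main_sep[OF b(1) b(4) b(2) b(5) ne] by blast
    then show "\<exists>i<1562. s ! i = 0 \<and> s' ! i \<noteq> 0" using lift_sep[OF b(1) b(4)] b by blast
  next
    fix s s' assume a: "s \<in> TT" "s' \<in> TT" "s \<noteq> s'"
    then obtain bs j bs' j' where b: "bs \<in> TB j" "j < 142" "s = concat bs" "bs' \<in> TB j'" "j' < 142" "s' = concat bs'"
      unfolding TT_def by blast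
    then have ne: "bs' \<noteq> bs" using a by blast
    obtain b where "b < 142" "sepB (bs'!b) (bs!b)" using main_sep[OF b(4) b(1) b(5) b(2) ne] by blast
    then obtain i where "i < 1562" "s' ! i = 0" "s ! i \<noteq> 0" using lift_sep[OF b(4) b(1)] b by blast
    then show "\<exists>j<1562. s ! j \<noteq> 0 \<and> s' ! j = 0" by blast
  next
    fix s s' s'' assume a: "s \<in> TT" "s' \<in> TT" "s'' \<in> TT" "s \<noteq> s' \<and> s \<noteq> s'' \<and> s' \<noteq> s''"
    then obtain bs j bs' j' bs'' j'' where b: "bs \<in> TB j" "j < 142" "s = concat bs" "bs' \<in> TB j'" "j' < 142" "s' = concat bs'"
      "bs'' \<in> TB j''" "j'' < 142" "s'' = concat bs''"
      unfolding TT_def by blast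
    then have ne: "bs \<noteq> bs'" "bs \<noteq> bs''" "bs' \<noteq> bs''" using a by blast+
    obtain b where "b < 142" "good3 (bs!b) (bs'!b) (bs''!b)"
      using main_good[OF b(1) b(4) b(7) b(2) b(5) b(8) ne] by blast
    then show "\<exists>k<1562. mset [s ! k, s' ! k, s'' ! k] \<in> {{#0, 1, 2#}, {#0, 0, 1#}, {#0, 0, 2#}}"
      using lift_good[OF b(1) b(4) b(7)] b by blast
  qed
qed

end
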